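(* Let $n\ge 2$. The function $\mathbf{H}:[0,1]^n\to[0,1]$ has no absorbing element, i.e. there is no $a\in[0,1]$ such that $\mathbf{H}(x_1,\dots,x_{i-1},a,x_{i+1},\dots,x_n)=a$ for every $i$ and all $x_j\in[0,1]$.
   Context: For $\mathbf{x}\in[0,1]^n$ let $x_{(1)}\ge\dots\ge x_{(n)}$ be its entries in decreasing order, and define the median $Med(\mathbf{x})=\frac12(x_{(k)}+x_{(k+1)})$ if $n=2k$ and $Med(\mathbf{x})=x_{(k+1)}$ if $n=2k+1$. Define $f_i(\mathbf{x})=\frac1n$ if $x_1=\dots=x_n$, and otherwise $f_i(\mathbf{x})=\frac{1}{n-1}\Big(1-\frac{|x_i-Med(\mathbf{x})|}{\sum_{j=1}^n|x_j-Med(\mathbf{x})|}\Big)$. Then $\mathbf{H}(\mathbf{x})=\sum_{i=1}^n f_i(\mathbf{x})\,x_i$. *)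

theory Defs
  imports "HOL-Analysis.Analysis"
begin

(* A point x in [0,1]^n is represented as a function x :: nat => real, of which
   only the entries x 0, ..., x (n-1) are relevant (the paper's x_1,...,x_n). *)

definition ord_stat :: "nat \<Rightarrow> (nat \<Rightarrow> real) \<Rightarrow> nat \<Rightarrow> real" where
  "ord_stat n x j = rev (sort (map x [0..<n])) ! (j - 1)"

definition Med :: "nat \<Rightarrow> (nat \<Rightarrow> real) \<Rightarrow> real" where
  "Med n x = (if even n then (ord_stat n x (n div 2) + ord_stat n x (n div 2 + 1)) / 2
              else ord_stat n x (n div 2 + 1))"

definition f_weight :: "nat \<Rightarrow> (nat \<Rightarrow> real) \<Rightarrow> nat \<Rightarrow> real" where
  "f_weight n x i =
     (if (\<forall>j<n. \<forall>k<n. x j = x k) then 1 / real n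
      else 1 / (real n - 1) *
        (1 - \<bar>x i - Med n x\<bar> / (\<Sum>j<n. \<bar>x j - Med n x\<bar>)))"

definition H :: "nat \<Rightarrow> (nat \<Rightarrow> real) \<Rightarrow> real" where
  "H n x = (\<Sum>i<n. f_weight n x i * x i)"

end

theory Submission
  imports Defs
begin

lemma insort_rep: "insort a (replicate m (b::real)) = (if a \<le> b then a # replicate m b else replicate m b @ [a])"
  by (induction m) auto

lemma sort_rep: "sort (a # replicate m (b::real)) = (if a \<le> b then a # replicate m b else replicate m b @ [a])"
proof -
  have "sort (replicate m b) = replicate m b"
    by (simp add: sorted_replicate sorted_sort_id)
  then show ?thesis by (simp add: insort_rep)
qed

lemma map_y: "map ((\<lambda>j. b)(0 := a)) [0..<Suc m] = a # replicate m (b::real)"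
proof -
  have "[0..<Suc m] = 0 # [1..<Suc m]" by (simp add: upt_conv_Cons)
  moreover have "map ((\<lambda>j. b)(0 := a)) [1..<Suc m] = replicate m b"
  proof -
    have "map ((\<lambda>j. b)(0 := a)) [1..<Suc m] = map (\<lambda>_. b) [1..<Suc m]"
      by (rule map_cong) auto
    then show ?thesis by (simp add: map_replicate_const)
  qed
  ultimately show ?thesis by simp
qed

lemma ord_y: "ord_stat (Suc m) ((\<lambda>j. b)(0 := a)) j =
   (if a \<le> b then (replicate m b @ [a]) ! (j - 1) else (a # replicate m (b::real)) ! (j - 1))"
  unfolding ord_stat_def map_y sort_rep by auto

lemma key1:
  fixes a b :: real
  assumes "a \<noteq> b"
  shows "H 2 ((\<lambda>j. b)(0 := a)) \<noteq> a"
proof -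
  define y :: "nat \<Rightarrow> real" where "y = (\<lambda>j. b)(0 := a)"
  have y0: "y 0 = a" and y1: "y (Suc 0) = b" unfolding y_def by auto
  have med: "Med 2 y = (a + b) / 2"
    using ord_y[of 1 b a] unfolding y_def by (auto simp: Med_def numeral_2_eq_2)
  have ne: "\<not> (\<forall>j<2. \<forall>k<2. y j = y k)"
  proof
    assume A: "\<forall>j<2. \<forall>k<2. y j = y k"
    have "y 0 = y (Suc 0)" using A by auto
    then show False using y0 y1 assms by simp
  qed
  have e1: "\<bar>a - (a+b)/2\<bar> = \<bar>a - b\<bar> / 2" "\<bar>b - (a+b)/2\<bar> = \<bar>a - b\<bar> / 2"
    by (auto simp: abs_if field_simps)
  have s: "(\<Sum>j<2. \<bar>y j - (a+b)/2\<bar>) = \<bar>a - b\<bar>"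
    by (simp add: numeral_2_eq_2 y0 y1 e1)
  have ab: "\<bar>a - b\<bar> \<noteq> 0" using assms by simp
  have fw: "f_weight 2 y 0 = 1/2" "f_weight 2 y (Suc 0) = 1/2"
    unfolding f_weight_def using ne by (simp_all only: if_False med s y0 y1 e1, simp_all add: ab assms)
  have "H 2 y = (a + b) / 2"
    unfolding H_def by (simp add: numeral_2_eq_2 fw[unfolded numeral_2_eq_2] y0 y1)
  then show ?thesis using assms unfolding y_def by auto
qed

lemma key2:
  fixes a b :: real and m :: nat
  assumes m2: "m \<ge> 2" and ab0: "a \<noteq> b"
  shows "H (Suc m) ((\<lambda>j. b)(0 := a)) \<noteq> a"
proof -
  define y :: "nat \<Rightarrow> real" where "y = (\<lambda>j. b)(0 := a)"
  have y0: "y 0 = a" and yS: "\<And>i. y (Suc i) = b" unfolding y_def by auto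
  have os: "ord_stat (Suc m) y j = b" if jj: "2 \<le> j" "j \<le> m" for j
  proof (cases "a \<le> b")
    case True
    have "j - 1 < m" using that by auto
    then show ?thesis using True unfolding y_def ord_y by (simp add: nth_append)
  next
    case False
    obtain k where "j - 1 = Suc k" "k < m"
      using jj by (intro that[of "j - 2"]) auto
    then show ?thesis using False unfolding y_def ord_y by simp
  qed
  have med: "Med (Suc m) y = b"
  proof (cases "even (Suc m)")
    case True
    have "2 \<le> Suc m div 2" "Suc m div 2 + 1 \<le> m"
      using True m2 by presburger+
    then show ?thesis unfolding Med_def using True os by simp
  next
    case False
    have "2 \<le> Suc m div 2 + 1" "Suc m div 2 + 1 \<le> m"
      using False m2 by presburger+
    then show ?thesis unfolding Med_def using False os by simp
  qed
  have ne: "\<not> (\<forall>j<Suc m. \<forall>k<Suc m. y j = y k)"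
  proof
    assume A: "\<forall>j<Suc m. \<forall>k<Suc m. y j = y k"
    have "y 0 = y (Suc 0)" using A m2 by auto
    then show False using y0 yS ab0 by simp
  qed
  have s: "(\<Sum>j<Suc m. \<bar>y j - b\<bar>) = \<bar>a - b\<bar>"
    by (simp only: sum.lessThan_Suc_shift) (simp add: y0 yS)
  have ab: "\<bar>a - b\<bar> \<noteq> 0" using ab0 by simp
  have fw0: "f_weight (Suc m) y 0 = 0"
    unfolding f_weight_def using ne by (simp only: if_False med s y0, simp add: ab ab0)
  have fwS: "f_weight (Suc m) y (Suc i) = 1 / real m" for i
    unfolding f_weight_def using ne by (simp only: if_False med s yS, simp add: ab ab0)
  have "H (Suc m) y = (\<Sum>i<m. 1 / real m * b)"
    unfolding H_def by (simp only: sum.lessThan_Suc_shift) (simp add: fw0 fwS yS)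
  also have "\<dots> = b" using m2 by simp
  finally show ?thesis using ab0 unfolding y_def by simp
qed

theorem proposition13:
  fixes n :: nat
  assumes "n \<ge> 2"
  shows "\<not> (\<exists>a::real. a \<in> {0..1} \<and>
            (\<forall>i<n. \<forall>x::nat \<Rightarrow> real. (\<forall>j<n. x j \<in> {0..1}) \<longrightarrow>
               H n (x(i := a)) = a))"
proof
  assume "\<exists>a::real. a \<in> {0..1} \<and>
            (\<forall>i<n. \<forall>x::nat \<Rightarrow> real. (\<forall>j<n. x j \<in> {0..1}) \<longrightarrow>
               H n (x(i := a)) = a)"
  then obtain a :: real where a: "a \<in> {0..1}" and h: "\<forall>i<n. \<forall>x::nat \<Rightarrow> real. (\<forall>j<n. x j \<in> {0..1}) \<longrightarrow>
               H n (x(i := a)) = a" by blast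
  define b :: real where "b = (if a = 0 then 1 else 0)"
  have b01: "b \<in> {0..1}" "a \<noteq> b" unfolding b_def by auto
  have "H n ((\<lambda>j. b)(0 := a)) = a"
    using h b01(1) assms by auto
  moreover have "H n ((\<lambda>j. b)(0 := a)) \<noteq> a"
  proof (cases "n = 2")
    case True
    then show ?thesis using key1[OF b01(2)] by simp
  next
    case False
    then obtain m where "n = Suc m" "m \<ge> 2" using assms by (cases n) auto
    then show ?thesis using key2[of m a b] b01 by simp
  qed
  ultimately show False by simp
qed

end
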